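(* Let $k\in\mathbb{N}$ and $\tilde P,\tilde Q\in\mathbb{R}[x]$. There exist $P,Q\in\mathbb{C}[x]$ satisfying (i) $\deg P\le k$, $\deg Q\le k-1$; (ii) $P$ has parity $(k\bmod 2)$ and $Q$ has parity $(k-1\bmod 2)$; (iii) $|P(x)|^2+(1-x^2)|Q(x)|^2=1$ for all $x\in[-1,1]$; and moreover $\Re[P]=\tilde P$, $\Re[Q]=\tilde Q$, if and only if $\tilde P,\tilde Q$ satisfy (i) and (ii) (with $\tilde P,\tilde Q$ in place of $P,Q$) and (vi) for all $x\in[-1,1]$: $\tilde P(x)^2+(1-x^2)\tilde Q(x)^2\le 1$.
   Context: For $P(x)=\sum_j a_jx^j\in\mathbb{C}[x]$, $\Re[P](x):=\sum_j \Re(a_j)x^j$. A polynomial is even (odd) if all its odd-power (even-power) coefficients vanish; the zero polynomial is both; parity $z$ means even if $z$ even and odd if $z$ odd. *)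

theory Defs
  imports "HOL-Analysis.Analysis" "HOL-Computational_Algebra.Polynomial"
begin

text \<open>Degree bound with the convention deg 0 = -infinity: all coefficients of
  index exceeding d vanish (d may be negative, e.g. k - 1 for k = 0).\<close>
definition deg_le :: "'a::zero poly \<Rightarrow> int \<Rightarrow> bool" where
  "deg_le p d \<longleftrightarrow> (\<forall>j. int j > d \<longrightarrow> coeff p j = 0)"

definition even_poly :: "'a::zero poly \<Rightarrow> bool" where
  "even_poly p \<longleftrightarrow> (\<forall>j. odd j \<longrightarrow> coeff p j = 0)"

definition odd_poly :: "'a::zero poly \<Rightarrow> bool" where
  "odd_poly p \<longleftrightarrow> (\<forall>j. even j \<longrightarrow> coeff p j = 0)"

definition has_parity :: "'a::zero poly \<Rightarrow> int \<Rightarrow> bool" where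
  "has_parity p z \<longleftrightarrow> (if even z then even_poly p else odd_poly p)"

definition Re_poly :: "complex poly \<Rightarrow> real poly" where
  "Re_poly p = map_poly Re p"

end

theory Submission imports Defs "HOL-Computational_Algebra.Fundamental_Theorem_Algebra" begin

abbreviation X2 :: "real poly" where "X2 \<equiv> [:0,0,1:]"
abbreviation NX :: "real poly" where "NX \<equiv> [:0,-1:]"

lemma map_of_real_add: "map_poly complex_of_real (p + q) = map_poly of_real p + map_poly of_real q"
  by (rule poly_eqI) (simp add: coeff_map_poly)

lemma map_of_real_mult: "map_poly complex_of_real (p * q) = map_poly of_real p * map_poly of_real q"
  by (rule poly_eqI) (simp add: coeff_map_poly coeff_mult of_real_sum)

lemma poly_map_of_real: "poly (map_poly complex_of_real p) (of_real x) = of_real (poly p x)"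
  by (induction p) (auto simp: map_poly_pCons)

lemma coeff_X2_mult: "coeff (X2 * q) j = (if j < 2 then 0 else coeff q (j - 2))"
  by (simp add: mult_pCons_left coeff_pCons split: nat.split)

lemma coeff_pcomp_X2: "coeff (pcompose p X2) j = (if even j then coeff p (j div 2) else 0)"
proof (induction p arbitrary: j)
  case 0 then show ?case by simp
next
  case (pCons a p)
  show ?case
    by (cases j) (auto simp: pcompose_pCons coeff_X2_mult pCons.IH coeff_pCons split: nat.split
         elim!: evenE oddE)
qed

lemma coeff_pcomp_NX: "coeff (pcompose p NX) j = (-1)^j * coeff p j"
proof (induction p arbitrary: j)
  case 0 then show ?case by simp
next
  case (pCons a p)
  show ?case
    by (cases j) (auto simp: pcompose_pCons mult_pCons_left pCons.IH coeff_pCons)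
qed


lemma deg_le_iff: "deg_le p d \<longleftrightarrow> p = 0 \<or> int (degree p) \<le> d"
proof
  assume h: "deg_le p d"
  show "p = 0 \<or> int (degree p) \<le> d"
  proof (cases "p = 0")
    case False
    hence "coeff p (degree p) \<noteq> 0" by simp
    with h show ?thesis unfolding deg_le_def by (meson not_le)
  qed simp
next
  assume "p = 0 \<or> int (degree p) \<le> d"
  then show "deg_le p d" unfolding deg_le_def
    by (auto intro: coeff_eq_0)
qed

lemma deg_le_add: "deg_le p d \<Longrightarrow> deg_le q d \<Longrightarrow> deg_le (p + q) d"
  by (simp add: deg_le_def)
lemma deg_le_diff: "deg_le p d \<Longrightarrow> deg_le (q::'a::ab_group_add poly) d \<Longrightarrow> deg_le (p - q) d"
  by (simp add: deg_le_def)
lemma deg_le_mono: "deg_le p d \<Longrightarrow> d \<le> e \<Longrightarrow> deg_le p e"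
  by (simp add: deg_le_def)
lemma deg_le_mult: "deg_le p a \<Longrightarrow> deg_le (q::'a::idom poly) b \<Longrightarrow> deg_le (p * q) (a + b)"
  unfolding deg_le_iff
  by (cases "p = 0 \<or> q = 0") (auto simp: degree_mult_eq)

definition good :: "nat \<Rightarrow> real poly \<Rightarrow> bool" where
 "good k R \<longleftrightarrow> (\<exists>A B. deg_le A (int k) \<and> deg_le B (int k - 1) \<and>
    pcompose A NX = smult ((-1)^k) A \<and> pcompose B NX = smult (-((-1)^k)) B \<and>
    R = A^2 + (1 - X2) * B^2)"

lemma X2_NX: "pcompose (1 - X2) NX = 1 - X2"
  by (simp add: pcompose_pCons pcompose_diff pcompose_1)

lemma deg_le_X2: "deg_le (1 - X2) 2"
  unfolding deg_le_def by (auto simp: coeff_pCons coeff_1 split: nat.split)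

lemma good_mult:
  assumes "good p R1" "good q R2" shows "good (p + q) (R1 * R2)"
proof -
  from assms(1) obtain A B where AB: "deg_le A (int p)" "deg_le B (int p - 1)"
    "pcompose A NX = smult ((-1)^p) A" "pcompose B NX = smult (-((-1)^p)) B"
    "R1 = A^2 + (1 - X2) * B^2" unfolding good_def by blast
  from assms(2) obtain C D where CD: "deg_le C (int q)" "deg_le D (int q - 1)"
    "pcompose C NX = smult ((-1)^q) C" "pcompose D NX = smult (-((-1)^q)) D"
    "R2 = C^2 + (1 - X2) * D^2" unfolding good_def by blast
  define A' where "A' = A * C + (1 - X2) * B * D"
  define B' where "B' = A * D - B * C"
  have "deg_le A' (int (p + q))"
    unfolding A'_def
  proof (rule deg_le_add)
    show "deg_le (A * C) (int (p + q))" using deg_le_mult[OF AB(1) CD(1)] by simp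
    have "deg_le ((1 - X2) * B * D) (2 + (int p - 1) + (int q - 1))"
      by (intro deg_le_mult deg_le_X2 AB CD)
    then show "deg_le ((1 - X2) * B * D) (int (p + q))" by simp
  qed
  moreover have "deg_le B' (int (p + q) - 1)"
    unfolding B'_def
  proof (rule deg_le_diff)
    show "deg_le (A * D) (int (p + q) - 1)" using deg_le_mult[OF AB(1) CD(2)] by (simp add: algebra_simps)
    show "deg_le (B * C) (int (p + q) - 1)" using deg_le_mult[OF AB(2) CD(1)] by (simp add: algebra_simps)
  qed
  moreover have "pcompose A' NX = smult ((-1)^(p+q)) A'"
  proof -
    have "pcompose A' NX = pcompose A NX * pcompose C NX + pcompose (1 - X2) NX * pcompose B NX * pcompose D NX"
      unfolding A'_def by (simp only: pcompose_mult pcompose_add)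
    also have "\<dots> = smult ((-1)^p) A * smult ((-1)^q) C + (1 - X2) * smult (-((-1)^p)) B * smult (-((-1)^q)) D"
      by (simp only: AB CD X2_NX)
    also have "\<dots> = smult ((-1)^(p+q)) A'"
      unfolding A'_def power_add by (simp only: mult_smult_left mult_smult_right smult_add_right smult_smult) (simp add: algebra_simps)
    finally show ?thesis .
  qed
  moreover have "pcompose B' NX = smult (-((-1)^(p+q))) B'"
  proof -
    have "pcompose B' NX = pcompose A NX * pcompose D NX - pcompose B NX * pcompose C NX"
      unfolding B'_def by (simp only: pcompose_mult pcompose_diff)
    also have "\<dots> = smult ((-1)^p) A * smult (-((-1)^q)) D - smult (-((-1)^p)) B * smult ((-1)^q) C"
      by (simp only: AB CD)
    also have "\<dots> = smult (-((-1)^(p+q))) B'"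
      unfolding B'_def power_add by (simp only: mult_smult_left mult_smult_right smult_diff_right smult_smult) (simp add: algebra_simps)
    finally show ?thesis .
  qed
  moreover have "R1 * R2 = A'^2 + (1 - X2) * B'^2"
    unfolding A'_def B'_def AB(5) CD(5) by (simp add: algebra_simps power2_eq_square)
  ultimately show ?thesis unfolding good_def by blast
qed


lemma good_I:
  assumes "deg_le A (int k)" "deg_le B (int k - 1)"
    "pcompose A NX = smult ((-1)^k) A" "pcompose B NX = smult (-((-1)^k)) B"
    "\<And>x. poly R x = (poly A x)^2 + (1 - x^2) * (poly B x)^2"
  shows "good k R"
proof -
  have "R = A^2 + (1 - X2) * B^2"
    unfolding poly_eq_poly_eq_iff[symmetric] using assms(5) by (auto simp: power2_eq_square)
  then show ?thesis using assms unfolding good_def by blast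
qed



lemma deg_le_const: "deg_le [:c:] 0"
  by (auto simp: deg_le_def coeff_pCons split: nat.split)
lemma deg_le_lin: "deg_le [:a,b:] 1"
  by (auto simp: deg_le_def coeff_pCons split: nat.split)

lemma good_const: "c \<ge> 0 \<Longrightarrow> good 0 [:c:]"
  by (rule good_I[where A="[:sqrt c:]" and B=0]) (auto simp: deg_le_def coeff_pCons split: nat.split)

lemma good_one: "good 1 1"
  by (rule good_I[where A="[:0,1:]" and B=1]) (auto simp: pcompose_1 pcompose_pCons deg_le_def coeff_1 coeff_pCons split: nat.split)

lemma good_mono: assumes "good k R" "k \<le> k'" shows "good k' R"
  using assms(2)
proof (induction k' rule: dec_induct)
  case (step n)
  then show ?case using good_mult[OF step(3) good_one] by simp
qed (use assms in auto)

lemma good_lin1: "r \<le> 0 \<Longrightarrow> good 1 (pcompose [:-r,1:] X2)"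
proof (rule good_I[where A="[:0,sqrt(1-r):]" and B="[:sqrt(-r):]"])
  fix x assume "r \<le> 0"
  then show "poly ([:- r, 1:] \<circ>\<^sub>p X2) x = (poly [:0, sqrt (1 - r):] x)\<^sup>2 + (1 - x\<^sup>2) * (poly [:sqrt (- r):] x)\<^sup>2"
    by (simp add: poly_pcompose power_mult_distrib power2_eq_square algebra_simps)
qed (auto simp: deg_le_lin deg_le_const pcompose_pCons)

lemma good_lin2: "r \<ge> 1 \<Longrightarrow> good 1 (pcompose [:r,-1:] X2)"
proof (rule good_I[where A="[:0,sqrt(r-1):]" and B="[:sqrt r:]"])
  fix x assume "r \<ge> 1"
  then show "poly ([:r, -1:] \<circ>\<^sub>p X2) x = (poly [:0, sqrt (r - 1):] x)\<^sup>2 + (1 - x\<^sup>2) * (poly [:sqrt r:] x)\<^sup>2"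
    by (simp add: poly_pcompose power_mult_distrib power2_eq_square algebra_simps)
qed (auto simp: deg_le_lin deg_le_const pcompose_pCons)

lemma good_sq: "good 2 (pcompose ([:-r,1:]^2) X2)"
proof (rule good_I[where A="pcompose [:-r,1:] X2" and B="0"])
  show "deg_le ([:- r, 1:] \<circ>\<^sub>p X2) (int 2)"
    by (auto simp: deg_le_def pcompose_pCons coeff_pCons split: nat.split)
qed (auto simp: deg_le_def pcompose_pCons poly_pcompose)


lemma good_quad: "good 2 (pcompose [:a^2+b^2, -2*a, 1:] X2)"
proof -
  define \<rho> where "\<rho> = sqrt (a^2+b^2)"
  define s where "s = sqrt ((a-1)^2+b^2)"
  define a2 where "a2 = \<rho> + s"
  define b1 where "b1 = sqrt (a2^2 - 1)"
  have r2: "\<rho>^2 = a^2+b^2" unfolding \<rho>_def by simp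
  have s2: "s^2 = (a-1)^2+b^2" unfolding s_def by simp
  have "sqrt (a^2) \<le> sqrt (a^2+b^2)" by (rule real_sqrt_le_mono) simp
  hence "\<bar>a\<bar> \<le> \<rho>" unfolding \<rho>_def by simp
  moreover have "sqrt ((a-1)^2) \<le> sqrt ((a-1)^2+b^2)" by (rule real_sqrt_le_mono) simp
  hence "\<bar>a - 1\<bar> \<le> s" unfolding s_def by simp
  ultimately have "1 \<le> a2" unfolding a2_def by linarith
  hence "1 \<le> a2^2" by (simp add: one_le_power)
  hence b2: "b1^2 = a2^2 - 1" unfolding b1_def by simp
  show ?thesis
  proof (rule good_I[where A="[:-\<rho>, 0, a2:]" and B="[:0, b1:]"])
    fix x
    have "a2^2 - 2*\<rho>*a2 = s^2 - \<rho>^2" unfolding a2_def by (simp add: power2_eq_square algebra_simps)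
    hence key: "a2^2 - 2*\<rho>*a2 - 1 = -2*a" using r2 s2 by (simp add: power2_eq_square algebra_simps)
    have "(poly [:-\<rho>, 0, a2:] x)\<^sup>2 + (1 - x\<^sup>2) * (poly [:0, b1:] x)\<^sup>2
        = x^4 * (a2^2 - b1^2) + x^2 * (b1^2 - 2*\<rho>*a2) + \<rho>^2"
      by (simp add: power2_eq_square power4_eq_xxxx algebra_simps)
    also have "\<dots> = x^4 + x^2 * (-2*a) + (a^2+b^2)"
    proof -
      have e1: "a2^2 - b1^2 = 1" using b2 by simp
      have e2: "b1^2 - 2*\<rho>*a2 = -2*a" using b2 key by simp
      show ?thesis unfolding e1 e2 r2 by simp
    qed
    also have "\<dots> = poly ([:a^2+b^2, -2*a, 1:] \<circ>\<^sub>p X2) x"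
      by (simp add: poly_pcompose power2_eq_square power4_eq_xxxx algebra_simps)
    finally show "poly ([:a^2+b^2, -2*a, 1:] \<circ>\<^sub>p X2) x = (poly [:-\<rho>, 0, a2:] x)\<^sup>2 + (1 - x\<^sup>2) * (poly [:0, b1:] x)\<^sup>2" by simp
  qed (auto simp: pcompose_pCons deg_le_def coeff_pCons split: nat.split)
qed


lemma poly_nonneg_left_end:
  fixes p :: "real poly"
  assumes "a < b" "\<And>t. a < t \<Longrightarrow> t < b \<Longrightarrow> 0 \<le> poly p t"
  shows "0 \<le> poly p a"
proof (rule tendsto_lowerbound)
  have "isCont (poly p) a" by simp
  hence "(poly p \<longlongrightarrow> poly p a) (at a)" by (simp add: isCont_def)
  then show "(poly p \<longlongrightarrow> poly p a) (at_right a)"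
    by (simp add: filterlim_at_split)
  show "\<forall>\<^sub>F x in at_right a. 0 \<le> poly p x"
    unfolding eventually_at_right_field using assms by blast
qed simp

lemma poly_nonneg_right_end:
  fixes p :: "real poly"
  assumes "a < b" "\<And>t. a < t \<Longrightarrow> t < b \<Longrightarrow> 0 \<le> poly p t"
  shows "0 \<le> poly p b"
proof (rule tendsto_lowerbound)
  have "isCont (poly p) b" by simp
  hence "(poly p \<longlongrightarrow> poly p b) (at b)" by (simp add: isCont_def)
  then show "(poly p \<longlongrightarrow> poly p b) (at_left b)"
    by (simp add: filterlim_at_split)
  show "\<forall>\<^sub>F x in at_left b. 0 \<le> poly p x"
    unfolding eventually_at_left_field using assms by blast
qed simp


lemma quad_dvd:
  fixes S :: "real poly"
  assumes z: "poly (map_poly complex_of_real S) z = 0" and b: "Im z \<noteq> 0"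
  shows "[:(Re z)^2 + (Im z)^2, -2*Re z, 1:] dvd S"
proof -
  define q where "q = [:(Re z)^2 + (Im z)^2, -2*Re z, 1:]"
  define m where "m = S mod q"
  have q0: "q \<noteq> 0" unfolding q_def by simp
  have dq: "degree q = 2" unfolding q_def by simp
  have "S = q * (S div q) + m" unfolding m_def by simp
  hence "map_poly complex_of_real S = map_poly of_real q * map_poly of_real (S div q) + map_poly of_real m"
    by (metis map_of_real_add map_of_real_mult)
  hence "poly (map_poly complex_of_real S) z = poly (map_poly of_real q) z * poly (map_poly of_real (S div q)) z + poly (map_poly of_real m) z"
    by simp
  moreover have "poly (map_poly complex_of_real q) z = 0"
    unfolding q_def by (simp add: map_poly_pCons complex_eq_iff power2_eq_square algebra_simps)
  ultimately have mz: "poly (map_poly complex_of_real m) z = 0" using z by simp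
  have "m = 0 \<or> degree m < 2" unfolding m_def using degree_mod_less[OF q0] dq by simp
  hence "degree m \<le> 1" by auto
  hence mm: "m = [:coeff m 0, coeff m 1:]"
    by (intro poly_eqI) (auto simp: coeff_pCons coeff_eq_0 split: nat.split)
  have "poly (map_poly complex_of_real [:coeff m 0, coeff m 1:]) z = 0" using mz mm by simp
  hence "of_real (coeff m 0) + of_real (coeff m 1) * z = 0" by (simp add: map_poly_pCons mult.commute)
  hence "coeff m 0 + coeff m 1 * Re z = 0" "coeff m 1 * Im z = 0" by (simp_all add: complex_eq_iff)
  with b have "coeff m 1 = 0" "coeff m 0 = 0" by auto
  with mm have "m = 0" by simp
  then show ?thesis unfolding m_def q_def[symmetric] by (simp add: mod_eq_0_iff_dvd)
qed


lemma mainL: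
  fixes S :: "real poly"
  shows "degree S \<le> k \<Longrightarrow> (\<forall>t\<in>{0..1}. 0 \<le> poly S t) \<Longrightarrow> good k (pcompose S X2)"
proof (induction "degree S" arbitrary: S k rule: less_induct)
  case less
  note nn = less.prems(2)
  show ?case
  proof (cases "degree S = 0")
    case True
    hence S: "S = [:coeff S 0:]" using degree_0_id by metis
    have "0 \<le> poly S 0" using nn by simp
    hence "0 \<le> coeff S 0" by (simp add: poly_0_coeff_0)
    hence "good 0 [:coeff S 0:]" by (rule good_const)
    hence "good k [:coeff S 0:]" by (rule good_mono) simp
    then show ?thesis by (subst S) simp
  next
    case False
    hence dS: "degree S > 0" by simp
    with less.prems(1) have k1: "k \<ge> 1" by simp
    have S0: "S \<noteq> 0" using False by auto
    have "degree (map_poly complex_of_real S) = degree S" by (rule degree_map_poly) simp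
    hence "\<not> constant (poly (map_poly complex_of_real S))"
      using False by (simp add: constant_degree)
    then obtain z where z: "poly (map_poly complex_of_real S) z = 0"
      using fundamental_theorem_of_algebra by blast
    show ?thesis
    proof (cases "Im z = 0")
      case True
      define r where "r = Re z"
      have "z = of_real r" using True unfolding r_def by (simp add: complex_eq_iff)
      hence "of_real (poly S r) = (0::complex)" using z by (simp add: poly_map_of_real)
      hence "poly S r = 0" by simp
      hence "[:-r,1:] dvd S" by (simp add: poly_eq_0_iff_dvd)
      then obtain S1 where S1: "S = [:-r,1:] * S1" by (elim dvdE)
      have S10: "S1 \<noteq> 0" using S0 S1 by auto
      have dS1: "degree S = degree S1 + 1" unfolding S1 by (subst degree_mult_eq) (use S10 in auto)
      have pS1: "\<And>t. poly S t = (t - r) * poly S1 t" by (subst S1) (simp add: algebra_simps)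
      consider "r \<le> 0" | "r \<ge> 1" | "0 < r \<and> r < 1" by linarith
      then show ?thesis
      proof cases
        case 1
        have pos: "\<And>t. 0 < t \<Longrightarrow> t \<le> 1 \<Longrightarrow> 0 \<le> poly S1 t"
        proof -
          fix t :: real assume "0 < t" "t \<le> 1"
          hence "0 \<le> (t - r) * poly S1 t" "t - r > 0" using nn pS1 1 by auto
          thus "0 \<le> poly S1 t" by (simp add: zero_le_mult_iff)
        qed
        have "0 \<le> poly S1 0" by (rule poly_nonneg_left_end[of 0 1]) (auto intro: pos)
        hence "\<forall>t\<in>{0..1}. 0 \<le> poly S1 t" using pos by (metis atLeastAtMost_iff order_le_less)
        hence "good (k - 1) (pcompose S1 X2)"
          using less.hyps[of S1 "k - 1"] dS1 less.prems(1) by simp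
        note g = good_mult[OF good_lin1[OF 1] this]
        have e: "1 + (k - 1) = k" using k1 by simp
        show ?thesis using g unfolding e by (simp only: S1 pcompose_mult)
      next
        case 2
        define S1' where "S1' = - S1"
        have S': "S = [:r,-1:] * S1'" unfolding S1'_def S1 by simp
        have pos: "\<And>t. 0 \<le> t \<Longrightarrow> t < 1 \<Longrightarrow> 0 \<le> poly S1' t"
        proof -
          fix t :: real assume "0 \<le> t" "t < 1"
          hence "0 \<le> (t - r) * poly S1 t" "r - t > 0" using nn pS1 2 by auto
          hence "0 \<le> (r - t) * poly S1' t" "r - t > 0" unfolding S1'_def by (simp_all add: algebra_simps)
          thus "0 \<le> poly S1' t" by (simp add: zero_le_mult_iff)
        qed
        have "0 \<le> poly S1' 1" by (rule poly_nonneg_right_end[of 0 1]) (auto intro: pos)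
        hence "\<forall>t\<in>{0..1}. 0 \<le> poly S1' t" using pos by (metis atLeastAtMost_iff order_le_less)
        hence "good (k - 1) (pcompose S1' X2)"
          using less.hyps[of S1' "k - 1"] dS1 less.prems(1) unfolding S1'_def by simp
        note g = good_mult[OF good_lin2[OF 2] this]
        have e: "1 + (k - 1) = k" using k1 by simp
        show ?thesis using g unfolding e by (simp only: S' pcompose_mult)
      next
        case 3
        have up: "\<And>t. r < t \<Longrightarrow> t < 1 \<Longrightarrow> 0 \<le> poly S1 t"
        proof -
          fix t :: real assume "r < t" "t < 1"
          hence "0 \<le> (t - r) * poly S1 t" "t - r > 0" using nn pS1 3 by auto
          thus "0 \<le> poly S1 t" by (simp add: zero_le_mult_iff)
        qed
        have lo: "\<And>t. 0 < t \<Longrightarrow> t < r \<Longrightarrow> 0 \<le> poly (-S1) t"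
        proof -
          fix t :: real assume "0 < t" "t < r"
          hence "0 \<le> (t - r) * poly S1 t" "t - r < 0" using nn pS1 3 by auto
          thus "0 \<le> poly (-S1) t" by (simp add: zero_le_mult_iff)
        qed
        have "0 \<le> poly S1 r" by (rule poly_nonneg_left_end[of r 1]) (use 3 up in auto)
        moreover have "0 \<le> poly (-S1) r" by (rule poly_nonneg_right_end[of 0 r]) (use 3 lo in auto)
        ultimately have "poly S1 r = 0" by simp
        hence "[:-r,1:] dvd S1" by (simp add: poly_eq_0_iff_dvd)
        then obtain S2 where S2: "S1 = [:-r,1:] * S2" by (elim dvdE)
        have S20: "S2 \<noteq> 0" using S10 S2 by auto
        have dS2: "degree S1 = degree S2 + 1" unfolding S2 by (subst degree_mult_eq) (use S20 in auto)
        have SS: "S = [:-r,1:]^2 * S2" unfolding S1 S2 power2_eq_square by (simp only: mult.assoc)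
        have pS2: "\<And>t. poly S t = (t - r)^2 * poly S2 t" by (subst SS) (simp add: algebra_simps)
        have pos: "\<And>t. 0 \<le> t \<Longrightarrow> t \<le> 1 \<Longrightarrow> t \<noteq> r \<Longrightarrow> 0 \<le> poly S2 t"
        proof -
          fix t :: real assume "0 \<le> t" "t \<le> 1" "t \<noteq> r"
          hence "0 \<le> (t - r)^2 * poly S2 t" "(t - r)^2 > 0" using nn pS2 by auto
          thus "0 \<le> poly S2 t" by (simp add: zero_le_mult_iff)
        qed
        have "0 \<le> poly S2 r" by (rule poly_nonneg_left_end[of r 1]) (use 3 pos in auto)
        hence "\<forall>t\<in>{0..1}. 0 \<le> poly S2 t" using pos by (metis atLeastAtMost_iff)
        moreover have "k \<ge> 2" using dS1 dS2 less.prems(1) by simp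
        ultimately have "good (k - 2) (pcompose S2 X2)"
          using less.hyps[of S2 "k - 2"] dS1 dS2 less.prems(1) by simp
        note g = good_mult[OF good_sq this]
        have e: "2 + (k - 2) = k" using \<open>k \<ge> 2\<close> by simp
        show ?thesis using g unfolding e by (simp only: SS pcompose_mult)
      qed
    next
      case False
      define q where "q = [:(Re z)^2 + (Im z)^2, -2*Re z, 1:]"
      have "q dvd S" unfolding q_def by (rule quad_dvd[OF z False])
      then obtain S1 where S1: "S = q * S1" by (elim dvdE)
      have S10: "S1 \<noteq> 0" using S0 S1 by auto
      have "q \<noteq> 0" unfolding q_def by simp
      have "degree q = 2" unfolding q_def by simp
      hence dS1: "degree S = degree S1 + 2" unfolding S1 using \<open>q \<noteq> 0\<close> S10 by (simp add: degree_mult_eq)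
      have qpos: "\<And>t. poly q t > 0"
      proof -
        fix t
        have "poly q t = (t - Re z)^2 + (Im z)^2" unfolding q_def by (simp add: power2_eq_square algebra_simps)
        thus "poly q t > 0" using False by (simp add: add_nonneg_pos)
      qed
      have "\<forall>t\<in>{0..1}. 0 \<le> poly S1 t"
      proof
        fix t :: real assume "t \<in> {0..1}"
        hence "0 \<le> poly q t * poly S1 t" using nn S1 by (metis poly_mult)
        thus "0 \<le> poly S1 t" using qpos[of t] by (simp add: zero_le_mult_iff)
      qed
      moreover have "k \<ge> 2" using dS1 less.prems(1) by simp
      ultimately have "good (k - 2) (pcompose S1 X2)"
        using less.hyps[of S1 "k - 2"] dS1 less.prems(1) by simp
      note g = good_mult[OF good_quad[of "Re z" "Im z"] this]
      have e: "2 + (k - 2) = k" using \<open>k \<ge> 2\<close> by simp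
      show ?thesis using g unfolding e by (simp only: S1 q_def pcompose_mult)
    qed
  qed
qed


lemma sym_iff:
  fixes p :: "real poly"
  shows "pcompose p NX = smult ((-1)^m) p \<longleftrightarrow> (\<forall>j. even j \<noteq> even m \<longrightarrow> coeff p j = 0)"
proof -
  have "pcompose p NX = smult ((-1)^m) p \<longleftrightarrow> (\<forall>j. (-1)^j * coeff p j = (-1)^m * coeff p j)"
    by (simp add: poly_eq_iff coeff_pcomp_NX)
  also have "\<dots> \<longleftrightarrow> (\<forall>j. even j \<noteq> even m \<longrightarrow> coeff p j = 0)"
  proof (intro iff_allI)
    fix j
    show "((-1)^j * coeff p j = (-1)^m * coeff p j) \<longleftrightarrow> (even j \<noteq> even m \<longrightarrow> coeff p j = 0)"
      by (cases "even j"; cases "even m") auto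
  qed
  finally show ?thesis .
qed

lemma par_k:
  fixes p :: "real poly"
  shows "has_parity p (int k mod 2) \<longleftrightarrow> pcompose p NX = smult ((-1)^k) p"
proof -
  have e: "even (int k mod 2) \<longleftrightarrow> even k" by simp
  show ?thesis
    by (cases "even k") (simp_all only: has_parity_def e sym_iff even_poly_def odd_poly_def if_True if_False simp_thms)
qed

lemma par_km1:
  fixes p :: "real poly"
  shows "has_parity p ((int k - 1) mod 2) \<longleftrightarrow> pcompose p NX = smult (-((-1)^k)) p"
proof -
  have "-((-1::real)^k) = (-1)^(Suc k)" by simp
  moreover have "even ((int k - 1) mod 2) \<longleftrightarrow> even (Suc k)" by simp
  ultimately show ?thesis
    by (cases "even k") (simp_all only: has_parity_def sym_iff even_poly_def odd_poly_def if_True if_False simp_thms even_Suc)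

qed

lemma sym_to_X2:
  fixes R :: "real poly"
  assumes "pcompose R NX = R"
  shows "\<exists>S. R = pcompose S X2 \<and> (\<forall>j. coeff S j = coeff R (2*j))"
proof -
  define S where "S = Poly (map (\<lambda>j. coeff R (2*j)) [0..<Suc (degree R)])"
  have cS: "coeff S j = coeff R (2*j)" for j
  proof (cases "j < Suc (degree R)")
    case True then show ?thesis by (simp add: S_def nth_default_def del: upt_Suc)
  next
    case False
    hence "coeff R (2*j) = 0" by (intro coeff_eq_0) simp
    with False show ?thesis by (simp add: S_def nth_default_def)
  qed
  have ev: "\<And>j. odd j \<Longrightarrow> coeff R j = 0"
    using assms sym_iff[of R 0] by simp
  have "R = pcompose S X2"
    by (rule poly_eqI) (auto simp: coeff_pcomp_X2 cS ev)
  with cS show ?thesis by blast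
qed

lemma poly_Re_poly: "poly (Re_poly P) x = Re (poly P (complex_of_real x))"
  unfolding Re_poly_def by (induction P) (auto simp: map_poly_pCons)


lemma coeff_Re_poly: "coeff (Re_poly P) j = Re (coeff P j)"
  unfolding Re_poly_def by (simp add: coeff_map_poly)

theorem mainTheorem4:
  fixes k :: nat and Pt Qt :: "real poly"
  shows "(\<exists>P Q :: complex poly.
            deg_le P (int k) \<and> deg_le Q (int k - 1) \<and>
            has_parity P (int k mod 2) \<and> has_parity Q ((int k - 1) mod 2) \<and>
            (\<forall>x::real\<in>{-1..1}.
               (cmod (poly P (complex_of_real x)))\<^sup>2
               + (1 - x\<^sup>2) * (cmod (poly Q (complex_of_real x)))\<^sup>2 = 1) \<and>
            Re_poly P = Pt \<and> Re_poly Q = Qt)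
    \<longleftrightarrow>
         (deg_le Pt (int k) \<and> deg_le Qt (int k - 1) \<and>
          has_parity Pt (int k mod 2) \<and> has_parity Qt ((int k - 1) mod 2) \<and>
          (\<forall>x::real\<in>{-1..1}. (poly Pt x)\<^sup>2 + (1 - x\<^sup>2) * (poly Qt x)\<^sup>2 \<le> 1))"
proof
  assume "\<exists>P Q :: complex poly.
            deg_le P (int k) \<and> deg_le Q (int k - 1) \<and>
            has_parity P (int k mod 2) \<and> has_parity Q ((int k - 1) mod 2) \<and>
            (\<forall>x::real\<in>{-1..1}.
               (cmod (poly P (complex_of_real x)))\<^sup>2
               + (1 - x\<^sup>2) * (cmod (poly Q (complex_of_real x)))\<^sup>2 = 1) \<and>
            Re_poly P = Pt \<and> Re_poly Q = Qt"
  then obtain P Q :: "complex poly" where H: "deg_le P (int k)" "deg_le Q (int k - 1)"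
    "has_parity P (int k mod 2)" "has_parity Q ((int k - 1) mod 2)"
    "\<forall>x::real\<in>{-1..1}. (cmod (poly P (complex_of_real x)))\<^sup>2
               + (1 - x\<^sup>2) * (cmod (poly Q (complex_of_real x)))\<^sup>2 = 1"
    "Re_poly P = Pt" "Re_poly Q = Qt" by blast
  have dl: "deg_le (Re_poly p) d" if "deg_le p d" for p d
    using that unfolding deg_le_def by (simp add: coeff_Re_poly)
  have hp: "has_parity (Re_poly p) z" if "has_parity p z" for p z
    using that unfolding has_parity_def even_poly_def odd_poly_def by (simp add: coeff_Re_poly)
  have ineq: "(poly Pt x)\<^sup>2 + (1 - x\<^sup>2) * (poly Qt x)\<^sup>2 \<le> 1" if x: "x \<in> {-1..1}" for x
  proof -
    have sq: "(Re w)\<^sup>2 \<le> (cmod w)\<^sup>2" for w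
      using abs_Re_le_cmod[of w] by (metis abs_ge_zero power2_abs power_mono)
    have "x\<^sup>2 \<le> 1" using x by (auto simp: abs_square_le_1)
    hence nn: "0 \<le> 1 - x\<^sup>2" by simp
    have "(poly Pt x)\<^sup>2 + (1 - x\<^sup>2) * (poly Qt x)\<^sup>2
        = (Re (poly P (of_real x)))\<^sup>2 + (1 - x\<^sup>2) * (Re (poly Q (of_real x)))\<^sup>2"
      using H(6,7) by (simp add: poly_Re_poly[symmetric])
    also have "\<dots> \<le> (cmod (poly P (of_real x)))\<^sup>2 + (1 - x\<^sup>2) * (cmod (poly Q (of_real x)))\<^sup>2"
      by (intro add_mono mult_left_mono sq nn)
    also have "\<dots> = 1" using H(5) x by blast
    finally show ?thesis .
  qed
  show "deg_le Pt (int k) \<and> deg_le Qt (int k - 1) \<and>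
          has_parity Pt (int k mod 2) \<and> has_parity Qt ((int k - 1) mod 2) \<and>
          (\<forall>x::real\<in>{-1..1}. (poly Pt x)\<^sup>2 + (1 - x\<^sup>2) * (poly Qt x)\<^sup>2 \<le> 1)"
    using H(6,7) dl[OF H(1)] dl[OF H(2)] hp[OF H(3)] hp[OF H(4)] ineq by blast
next
  assume H: "deg_le Pt (int k) \<and> deg_le Qt (int k - 1) \<and>
          has_parity Pt (int k mod 2) \<and> has_parity Qt ((int k - 1) mod 2) \<and>
          (\<forall>x::real\<in>{-1..1}. (poly Pt x)\<^sup>2 + (1 - x\<^sup>2) * (poly Qt x)\<^sup>2 \<le> 1)"
  have sP: "pcompose Pt NX = smult ((-1)^k) Pt" using H par_k by blast
  have sQ: "pcompose Qt NX = smult (-((-1)^k)) Qt" using H par_km1 by blast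
  define R where "R = 1 - Pt^2 - (1 - X2) * Qt^2"
  have sq1: "((-1::real)^k)^2 = 1" by (cases "even k") auto
  have Rsym: "pcompose R NX = R"
  proof -
    have "pcompose R NX = 1 - (pcompose Pt NX)^2 - pcompose (1 - X2) NX * (pcompose Qt NX)^2"
      unfolding R_def by (simp only: pcompose_diff pcompose_mult pcompose_1 power2_eq_square)
    also have "\<dots> = 1 - (smult ((-1)^k) Pt)^2 - (1 - X2) * (smult (-((-1)^k)) Qt)^2"
      by (simp only: sP sQ X2_NX)
    also have "\<dots> = R" unfolding R_def
      by (simp only: power2_eq_square mult_smult_left mult_smult_right smult_smult)
         (simp add: power_mult_distrib[symmetric] power2_eq_square[symmetric] sq1)
    finally show ?thesis .
  qed
  have dR: "deg_le R (2 * int k)"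
    unfolding R_def power2_eq_square
  proof (intro deg_le_diff)
    show "deg_le (1::real poly) (2 * int k)"
      by (rule deg_le_mono[of _ 0]) (auto simp: deg_le_def coeff_1)
    show "deg_le (Pt * Pt) (2 * int k)" using deg_le_mult[of Pt "int k" Pt "int k"] H by simp
    have "deg_le ((1 - X2) * (Qt * Qt)) (2 + ((int k - 1) + (int k - 1)))"
      by (intro deg_le_mult deg_le_X2) (use H in auto)
    then show "deg_le ((1 - X2) * (Qt * Qt)) (2 * int k)" by simp
  qed
  obtain S where S: "R = pcompose S X2" "\<And>j. coeff S j = coeff R (2*j)"
    using sym_to_X2[OF Rsym] by blast
  have degS: "degree S \<le> k"
  proof (rule degree_le, intro allI impI)
    fix j assume "k < j"
    hence "int (2*j) > 2 * int k" by simp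
    thus "coeff S j = 0" using dR unfolding deg_le_def S(2) by blast
  qed
  have Rnn: "0 \<le> poly R x" if "x \<in> {-1..1}" for x
    using H that unfolding R_def by (auto simp: power2_eq_square algebra_simps)
  have Snn: "\<forall>t\<in>{0..1}. 0 \<le> poly S t"
  proof
    fix t :: real assume t: "t \<in> {0..1}"
    have "poly S t = poly R (sqrt t)" using t unfolding S(1) by (simp add: poly_pcompose power2_eq_square[symmetric])
    moreover have "sqrt t \<in> {-1..1}"
    proof -
      have "0 \<le> sqrt t" "sqrt t \<le> 1" using t by auto
      hence "-1 \<le> sqrt t" "sqrt t \<le> 1" by linarith+
      thus ?thesis by (simp only: atLeastAtMost_iff)
    qed
    ultimately show "0 \<le> poly S t" using Rnn by simp
  qed
  have "good k R" using mainL[OF degS Snn] S(1) by simp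
  then obtain A B where AB: "deg_le A (int k)" "deg_le B (int k - 1)"
    "pcompose A NX = smult ((-1)^k) A" "pcompose B NX = smult (-((-1)^k)) B"
    "R = A^2 + (1 - X2) * B^2" unfolding good_def by blast
  have pA: "has_parity A (int k mod 2)" using AB(3) par_k by blast
  have pB: "has_parity B ((int k - 1) mod 2)" using AB(4) par_km1 by blast
  define P where "P = map_poly complex_of_real Pt + smult \<i> (map_poly complex_of_real A)"
  define Q where "Q = map_poly complex_of_real Qt + smult \<i> (map_poly complex_of_real B)"
  have cP: "coeff P j = of_real (coeff Pt j) + \<i> * of_real (coeff A j)" for j
    unfolding P_def by (simp add: coeff_map_poly)
  have cQ: "coeff Q j = of_real (coeff Qt j) + \<i> * of_real (coeff B j)" for j
    unfolding Q_def by (simp add: coeff_map_poly)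
  have "deg_le P (int k)" using H AB(1) unfolding deg_le_def cP by simp
  moreover have "deg_le Q (int k - 1)" using H AB(2) unfolding deg_le_def cQ by simp
  moreover have "has_parity P (int k mod 2)"
    using H pA unfolding has_parity_def even_poly_def odd_poly_def cP by (auto split: if_splits)
  moreover have "has_parity Q ((int k - 1) mod 2)"
    using H pB unfolding has_parity_def even_poly_def odd_poly_def cQ by (auto split: if_splits)
  moreover have "Re_poly P = Pt" by (rule poly_eqI) (simp add: coeff_Re_poly cP)
  moreover have "Re_poly Q = Qt" by (rule poly_eqI) (simp add: coeff_Re_poly cQ)
  moreover have "\<forall>x::real\<in>{-1..1}. (cmod (poly P (complex_of_real x)))\<^sup>2
               + (1 - x\<^sup>2) * (cmod (poly Q (complex_of_real x)))\<^sup>2 = 1"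
  proof
    fix x :: real assume "x \<in> {-1..1}"
    have eP: "poly P (of_real x) = of_real (poly Pt x) + \<i> * of_real (poly A x)"
      unfolding P_def by (simp add: poly_map_of_real)
    have eQ: "poly Q (of_real x) = of_real (poly Qt x) + \<i> * of_real (poly B x)"
      unfolding Q_def by (simp add: poly_map_of_real)
    have "poly R x = (poly A x)^2 + (1 - x^2) * (poly B x)^2"
      unfolding AB(5) by (simp add: power2_eq_square)
    moreover have "poly R x = 1 - (poly Pt x)^2 - (1 - x^2) * (poly Qt x)^2"
      unfolding R_def by (simp add: power2_eq_square)
    ultimately show "(cmod (poly P (complex_of_real x)))\<^sup>2
               + (1 - x\<^sup>2) * (cmod (poly Q (complex_of_real x)))\<^sup>2 = 1"
      unfolding eP eQ cmod_power2 by (simp add: algebra_simps)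
  qed
  ultimately show "\<exists>P Q :: complex poly.
            deg_le P (int k) \<and> deg_le Q (int k - 1) \<and>
            has_parity P (int k mod 2) \<and> has_parity Q ((int k - 1) mod 2) \<and>
            (\<forall>x::real\<in>{-1..1}.
               (cmod (poly P (complex_of_real x)))\<^sup>2
               + (1 - x\<^sup>2) * (cmod (poly Q (complex_of_real x)))\<^sup>2 = 1) \<and>
            Re_poly P = Pt \<and> Re_poly Q = Qt" by blast
qed

end
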